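(* Let $H$ be a fixed hypergraph on $m$ vertices $\{1,\dots,m\}$ and $s_1,\dots,s_m$ positive integers, and let $\delta=\frac{\max\{s_i:1\le i\le m\}}{\prod_{i=1}^m s_i}$. Then for sufficiently large $n$, every hypergraph $G$ on $n$ vertices with $R(G)=R(H)$ that contains no subgraph $H(s_1,\dots,s_m)$ satisfies $\mu_H(G)=O(n^{-\delta})$ (the implied constant depending only on $H$ and $s_1,\dots,s_m$).
   Context: A hypergraph $H=(V,E)$ has finite vertex set $V$ and edge set $E\subseteq 2^V$; $R(H)=\{|F|:F\in E\}$. $H_1\subseteq H_2$ (subgraph) means there is an injective $f\colon V(H_1)\to V(H_2)$ with $f(F)\in E(H_2)$ for all $F\in E(H_1)$. The density $\mu_H(G)$ of $H$ in $G$ (with $R(H)=R(G)$) is the probability that a uniformly random injective map $f\colon V(H)\to V(G)$ satisfies $f(F)\in E(G)$ for all $F\in E(H)$. The blowup $H(s_1,\dots,s_m)$ has vertex set $V_1\sqcup\dots\sqcup V_m$, $|V_i|=s_i$, and edge set $\bigcup_{F\in E(H)}\prod_{i\in F}V_i$. *)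

theory Defs
  imports Complex_Main "HOL-Library.FuncSet"
begin

definition is_hypergraph :: "'a set \<Rightarrow> 'a set set \<Rightarrow> bool" where
  "is_hypergraph V E \<longleftrightarrow> finite V \<and> E \<subseteq> Pow V"

definition edge_sizes :: "'a set set \<Rightarrow> nat set" where
  "edge_sizes E = card ` E"

definition sub_hg :: "'a set \<Rightarrow> 'a set set \<Rightarrow> 'b set \<Rightarrow> 'b set set \<Rightarrow> bool" where
  "sub_hg V1 E1 V2 E2 \<longleftrightarrow>
     (\<exists>f. inj_on f V1 \<and> f ` V1 \<subseteq> V2 \<and> (\<forall>F\<in>E1. f ` F \<in> E2))"

text \<open>Injective maps V1 to V2 (as extensional functions, so they are counted once each).\<close>
definition inj_maps :: "'a set \<Rightarrow> 'b set \<Rightarrow> ('a \<Rightarrow> 'b) set" where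
  "inj_maps V1 V2 = {f \<in> V1 \<rightarrow>\<^sub>E V2. inj_on f V1}"

definition hg_density :: "'a set \<Rightarrow> 'a set set \<Rightarrow> 'b set \<Rightarrow> 'b set set \<Rightarrow> real" where
  "hg_density V1 E1 V2 E2 =
     real (card {f \<in> inj_maps V1 V2. \<forall>F\<in>E1. f ` F \<in> E2}) / real (card (inj_maps V1 V2))"

text \<open>Blowup H(s_0,...,s_{m-1}) of H on vertex set {0..<m}: V_i = {i} x {0..<s i}.\<close>
definition blowup_V :: "nat \<Rightarrow> (nat \<Rightarrow> nat) \<Rightarrow> (nat \<times> nat) set" where
  "blowup_V m s = {(i, j). i < m \<and> j < s i}"

definition blowup_E :: "nat set set \<Rightarrow> (nat \<Rightarrow> nat) \<Rightarrow> (nat \<times> nat) set set" where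
  "blowup_E E s = {(\<lambda>i. (i, g i)) ` F | F g. F \<in> E \<and> (\<forall>i\<in>F. g i < s i)}"

end

theory Submission
  imports Defs
begin


lemma cheb_set:
  fixes f g :: "'a \<Rightarrow> real"
  assumes "finite A" "\<And>x y. x\<in>A \<Longrightarrow> y\<in>A \<Longrightarrow> (f x - f y) * (g x - g y) \<ge> 0"
  shows "(\<Sum>x\<in>A. f x) * (\<Sum>x\<in>A. g x) \<le> real (card A) * (\<Sum>x\<in>A. f x * g x)"
proof -
  have "0 \<le> (\<Sum>x\<in>A. \<Sum>y\<in>A. (f x - f y) * (g x - g y))"
    using assms by (intro sum_nonneg) auto
  also have "\<dots> = (\<Sum>x\<in>A. \<Sum>y\<in>A. f x * g x + f y * g y - f x * g y - f y * g x)"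
    by (simp add: algebra_simps)
  also have "\<dots> = 2 * (real (card A) * (\<Sum>x\<in>A. f x * g x) - (\<Sum>x\<in>A. f x) * (\<Sum>x\<in>A. g x))"
    by (simp add: sum_subtractf sum.distrib sum_distrib_left sum_distrib_right
        sum.swap[of "\<lambda>i j. f j * g i"] algebra_simps)
  finally show ?thesis by simp
qed

lemma jensen_pow:
  fixes f :: "'a \<Rightarrow> real"
  assumes "finite A" "\<And>x. x\<in>A \<Longrightarrow> f x \<ge> 0"
  shows "(\<Sum>x\<in>A. f x)^Suc k \<le> real(card A)^k * (\<Sum>x\<in>A. f x ^ Suc k)"
proof (induction k)
  case 0 then show ?case by simp
next
  case (Suc k)
  have S0: "0 \<le> (\<Sum>x\<in>A. f x)" using assms by (simp add: sum_nonneg)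
  have ch: "(\<Sum>x\<in>A. f x) * (\<Sum>x\<in>A. f x ^ Suc k) \<le> real (card A) * (\<Sum>x\<in>A. f x * f x ^ Suc k)"
  proof (rule cheb_set[OF assms(1)])
    fix x y assume "x \<in> A" "y \<in> A"
    hence "f x \<ge> 0" "f y \<ge> 0" using assms by auto
    show "0 \<le> (f x - f y) * (f x ^ Suc k - f y ^ Suc k)"
    proof (cases "f x \<le> f y")
      case True
      hence "f x ^ Suc k \<le> f y ^ Suc k" using \<open>f x \<ge> 0\<close> by (rule power_mono)
      then show ?thesis using True by (simp add: mult_nonpos_nonpos)
    next
      case False
      hence "f y ^ Suc k \<le> f x ^ Suc k" using \<open>f y \<ge> 0\<close> by (intro power_mono) auto
      then show ?thesis using False by simp
    qed
  qed
  have "(\<Sum>x\<in>A. f x)^Suc (Suc k) = (\<Sum>x\<in>A. f x) * (\<Sum>x\<in>A. f x)^Suc k" by simp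
  also have "\<dots> \<le> (\<Sum>x\<in>A. f x) * (real(card A)^k * (\<Sum>x\<in>A. f x ^ Suc k))"
    using Suc S0 by (intro mult_left_mono) auto
  also have "\<dots> = real(card A)^k * ((\<Sum>x\<in>A. f x) * (\<Sum>x\<in>A. f x ^ Suc k))" by simp
  also have "\<dots> \<le> real(card A)^k * (real (card A) * (\<Sum>x\<in>A. f x * f x ^ Suc k))"
    using ch by (intro mult_left_mono) auto
  also have "\<dots> = real(card A)^Suc k * (\<Sum>x\<in>A. f x ^ Suc (Suc k))" by simp
  finally show ?case .
qed

definition cnt :: "'b set \<Rightarrow> nat set \<Rightarrow> ((nat \<Rightarrow> 'b) \<Rightarrow> bool) \<Rightarrow> real" where
  "cnt V I \<Phi> = (\<Sum>x\<in>PiE I (\<lambda>_. V). of_bool (\<Phi> x))"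

definition cntB :: "'b set \<Rightarrow> nat set \<Rightarrow> (nat \<Rightarrow> nat) \<Rightarrow> ((nat \<Rightarrow> 'b) \<Rightarrow> bool) \<Rightarrow> real" where
  "cntB V I s \<Phi> = (\<Sum>y\<in>PiE I (\<lambda>i. PiE {..<s i} (\<lambda>_. V)).
      of_bool (\<forall>g\<in>PiE I (\<lambda>i. {..<s i}). \<Phi> (\<lambda>i\<in>I. y i (g i))))"

lemma restrict_upd_eq:
  assumes "a \<notin> I"
  shows "(\<lambda>i\<in>insert a I. (y(a:=z)) i ((g(a:=j)) i)) = (\<lambda>i\<in>I. y i (g i))(a := z j)"
  using assms by (intro ext) auto

lemma ball_PiE_insert:
  assumes "a \<notin> I"
  shows "(\<forall>g\<in>PiE (insert a I) G. Q g) \<longleftrightarrow> (\<forall>j\<in>G a. \<forall>g\<in>PiE I G. Q (g(a:=j)))"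
  by (subst PiE_insert_eq) auto

lemma sum_PiE_insert:
  fixes h :: "(nat \<Rightarrow> 'c) \<Rightarrow> real"
  assumes "finite I" "a \<notin> I" "\<And>i. i \<in> insert a I \<Longrightarrow> finite (T i)"
  shows "(\<Sum>y\<in>PiE (insert a I) T. h y) = (\<Sum>z\<in>T a. \<Sum>y\<in>PiE I T. h (y(a:=z)))"
proof -
  have "(\<Sum>y\<in>PiE (insert a I) T. h y) = (\<Sum>p\<in>T a \<times> PiE I T. h ((\<lambda>(z, y). y(a:=z)) p))"
    by (subst PiE_insert_eq, subst sum.reindex[OF inj_combinator[OF assms(2)]]) (simp add: o_def)
  also have "\<dots> = (\<Sum>z\<in>T a. \<Sum>y\<in>PiE I T. h (y(a:=z)))"
    by (simp add: sum.cartesian_product split_beta')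
  finally show ?thesis .
qed

lemma cntB_insert:
  assumes "finite I" "a \<notin> I" "finite V"
  shows "cntB V (insert a I) s \<Phi> =
    (\<Sum>z\<in>PiE {..<s a} (\<lambda>_. V). cntB V I s (\<lambda>x. \<forall>j<s a. \<Phi> (x(a := z j))))"
  unfolding cntB_def
  apply (subst sum_PiE_insert[OF assms(1,2)])
   apply (simp add: assms finite_PiE)
  apply (intro sum.cong refl)
  apply (subst ball_PiE_insert[OF assms(2)])
  apply (rule arg_cong[where f=of_bool])
  apply (simp only: restrict_upd_eq[OF assms(2)] lessThan_iff)
  apply blast
  done

lemma of_bool_ball:
  "finite A \<Longrightarrow> (of_bool (\<forall>x\<in>A. P x) :: real) = (\<Prod>x\<in>A. of_bool (P x))"
  by (induction A rule: finite_induct) auto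

lemma cnt_insert:
  assumes "finite I" "a \<notin> I" "finite V"
  shows "cnt V (insert a I) \<Phi> = (\<Sum>x\<in>PiE I (\<lambda>_. V). \<Sum>w\<in>V. of_bool (\<Phi> (x(a:=w))))"
  unfolding cnt_def
  apply (subst sum_PiE_insert[OF assms(1,2)])
   apply (simp add: assms)
  apply (rule sum.swap)
  done

lemma sum_cnt_Psi:
  assumes "finite I" "finite V"
  shows "(\<Sum>z\<in>PiE {..<r} (\<lambda>_. V). cnt V I (\<lambda>x. \<forall>j<r. \<Phi> (x(a := z j))))
        = (\<Sum>x\<in>PiE I (\<lambda>_. V). (\<Sum>w\<in>V. of_bool (\<Phi> (x(a:=w))))^r)"
proof -
  have "(\<Sum>z\<in>PiE {..<r} (\<lambda>_. V). cnt V I (\<lambda>x. \<forall>j<r. \<Phi> (x(a := z j))))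
     = (\<Sum>z\<in>PiE {..<r} (\<lambda>_. V). \<Sum>x\<in>PiE I (\<lambda>_. V). \<Prod>j\<in>{..<r}. of_bool (\<Phi> (x(a := z j))))"
    unfolding cnt_def using of_bool_ball[of "{..<r}"] by (intro sum.cong refl) (simp add: lessThan_def)
  also have "\<dots> = (\<Sum>x\<in>PiE I (\<lambda>_. V). \<Sum>z\<in>PiE {..<r} (\<lambda>_. V). \<Prod>j\<in>{..<r}. of_bool (\<Phi> (x(a := z j))))"
    by (rule sum.swap)
  also have "\<dots> = (\<Sum>x\<in>PiE I (\<lambda>_. V). \<Prod>j\<in>{..<r}. \<Sum>w\<in>V. of_bool (\<Phi> (x(a := w))))"
    using assms by (intro sum.cong refl, subst prod_sum_PiE) auto
  also have "\<dots> = (\<Sum>x\<in>PiE I (\<lambda>_. V). (\<Sum>w\<in>V. of_bool (\<Phi> (x(a:=w))))^r)"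
    by simp
  finally show ?thesis .
qed



lemma cnt_nonneg: "cnt V I \<Phi> \<ge> 0" unfolding cnt_def by (simp add: sum_nonneg)
lemma cntB_nonneg: "cntB V I s \<Phi> \<ge> 0" unfolding cntB_def by (simp add: sum_nonneg)

lemma main_ineq:
  assumes "finite I" "finite V" "V \<noteq> {}" "\<forall>i\<in>I. 0 < s i"
  shows "cnt V I \<Phi> ^ (\<Prod>i\<in>I. s i) * real (card V) ^ (\<Sum>i\<in>I. s i)
         \<le> cntB V I s \<Phi> * real (card V) ^ (card I * (\<Prod>i\<in>I. s i))"
  using assms(1,4)
proof (induction I arbitrary: \<Phi> rule: finite_induct)
  case empty
  then show ?case by (simp add: cnt_def cntB_def)
next
  case (insert a I)
  define n where "n = real (card V)"
  have npos: "n > 0" using assms(2,3) by (simp add: n_def card_gt_0_iff)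
  define r where "r = s a"
  have rpos: "r > 0" using insert by (simp add: r_def)
  define P where "P = (\<Prod>i\<in>I. s i)"
  have Ppos: "P > 0" using insert by (simp add: P_def)
  define L where "L = (\<Sum>i\<in>I. s i)"
  define Z where "Z = PiE {..<r} (\<lambda>_. V)"
  define X0 where "X0 = PiE I (\<lambda>_::nat. V)"
  define \<Psi> where "\<Psi> z = (\<lambda>x. \<forall>j<r. \<Phi> (x(a := z j)))" for z :: "nat \<Rightarrow> 'a"
  define d where "d x = (\<Sum>w\<in>V. of_bool (\<Phi> (x(a:=w))) :: real)" for x
  define X where "X = cnt V (insert a I) \<Phi>"
  define S where "S = (\<Sum>z\<in>Z. cnt V I (\<Psi> z))"
  define T where "T = (\<Sum>z\<in>Z. cnt V I (\<Psi> z) ^ P)"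
  define Bn where "Bn = cntB V (insert a I) s \<Phi>"
  have finZ: "finite Z" "finite X0" using assms(2) insert by (auto simp: Z_def X0_def finite_PiE)
  have cardZ: "real (card Z) = n ^ r" by (simp add: Z_def card_PiE n_def)
  have cardX0: "real (card X0) = n ^ card I" using insert by (simp add: X0_def card_PiE n_def)
  have X_eq: "X = (\<Sum>x\<in>X0. d x)" unfolding X_def X0_def d_def using insert assms(2) by (intro cnt_insert) auto
  have S_eq: "S = (\<Sum>x\<in>X0. d x ^ r)" unfolding S_def X0_def d_def Z_def \<Psi>_def
    using insert assms(2) by (intro sum_cnt_Psi) auto
  have Bn_eq: "Bn = (\<Sum>z\<in>Z. cntB V I s (\<Psi> z))" unfolding Bn_def Z_def \<Psi>_def r_def
    using insert assms(2) by (intro cntB_insert) auto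
  have dnn: "d x \<ge> 0" for x by (simp add: d_def sum_nonneg)
  have Snn: "S \<ge> 0" by (simp add: S_def sum_nonneg cnt_nonneg)
  obtain r0 where r0: "r = Suc r0" using rpos by (cases r) auto
  obtain p0 where p0: "P = Suc p0" using Ppos by (cases P) auto
  have J1: "X ^ r \<le> (n ^ card I) ^ r0 * S"
    using jensen_pow[OF finZ(2), of d r0] dnn unfolding X_eq S_eq r0 cardX0 by simp
  have J2: "S ^ P \<le> (n ^ r) ^ p0 * T"
    using jensen_pow[OF finZ(1), of "\<lambda>z. cnt V I (\<Psi> z)" p0, OF cnt_nonneg]
    unfolding S_def T_def p0 cardZ by simp
  have IH: "T * n ^ L \<le> Bn * n ^ (card I * P)"
  proof -
    have "T * n ^ L = (\<Sum>z\<in>Z. cnt V I (\<Psi> z) ^ P * n ^ L)" by (simp add: T_def sum_distrib_right)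
    also have "\<dots> \<le> (\<Sum>z\<in>Z. cntB V I s (\<Psi> z) * n ^ (card I * P))"
      using insert.IH insert.prems by (intro sum_mono) (auto simp: P_def L_def n_def)
    also have "\<dots> = Bn * n ^ (card I * P)" by (simp add: Bn_eq sum_distrib_right)
    finally show ?thesis .
  qed
  have Xnn: "X \<ge> 0" by (simp add: X_def cnt_nonneg)
  have "X ^ (r * P) * n ^ (r + L) = (X ^ r) ^ P * n ^ (r + L)" by (simp add: power_mult)
  also have "\<dots> \<le> ((n ^ card I) ^ r0 * S) ^ P * n ^ (r + L)"
    using J1 Xnn npos by (intro mult_right_mono power_mono) auto
  also have "\<dots> = (n ^ card I) ^ (r0 * P) * S ^ P * n ^ (r + L)"
    by (simp add: power_mult_distrib power_mult)
  also have "\<dots> \<le> (n ^ card I) ^ (r0 * P) * ((n ^ r) ^ p0 * T) * n ^ (r + L)"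
    using J2 npos by (intro mult_right_mono mult_left_mono) auto
  also have "\<dots> = (n ^ card I) ^ (r0 * P) * (n ^ r) ^ p0 * n ^ r * (T * n ^ L)"
    by (simp add: power_add algebra_simps)
  also have "\<dots> \<le> (n ^ card I) ^ (r0 * P) * (n ^ r) ^ p0 * n ^ r * (Bn * n ^ (card I * P))"
    using IH npos by (intro mult_left_mono) auto
  also have "\<dots> = Bn * n ^ (card I * (r0 * P) + r * p0 + r + card I * P)"
    by (simp only: power_mult[symmetric] power_add mult_ac)
  also have "card I * (r0 * P) + r * p0 + r + card I * P = Suc (card I) * (r * P)"
    using r0 p0 by (simp add: algebra_simps)
  finally have fin: "X ^ (r * P) * n ^ (r + L) \<le> Bn * n ^ (Suc (card I) * (r * P))" .
  show ?case using fin insert.hyps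
    by (simp add: X_def Bn_def n_def r_def P_def L_def)
qed



lemma card_eq_pair:
  assumes "finite D" "finite V" "q \<in> D" "p \<noteq> q"
  shows "card {f\<in>PiE D (\<lambda>_. V). f p = f q} \<le> card V ^ (card D - 1)"
proof -
  have "card {f\<in>PiE D (\<lambda>_. V). f p = f q} \<le> card (PiE (D - {q}) (\<lambda>_. V))"
  proof (rule card_inj_on_le)
    show "inj_on (\<lambda>f. f(q:=undefined)) {f\<in>PiE D (\<lambda>_. V). f p = f q}"
    proof (rule inj_onI)
      fix f g assume f: "f \<in> {f\<in>PiE D (\<lambda>_. V). f p = f q}" and g: "g \<in> {f\<in>PiE D (\<lambda>_. V). f p = f q}"
        and eq: "f(q:=undefined) = g(q:=undefined)"
      have "f p = g p" using eq assms(4) by (metis fun_upd_other)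
      hence "f q = g q" using f g by simp
      thus "f = g" using eq by (metis fun_upd_idem_iff fun_upd_upd)
    qed
    show "(\<lambda>f. f(q:=undefined)) ` {f\<in>PiE D (\<lambda>_. V). f p = f q} \<subseteq> PiE (D - {q}) (\<lambda>_. V)"
      by (force simp: PiE_def extensional_def Pi_def)
    show "finite (PiE (D - {q}) (\<lambda>_. V))" using assms by (simp add: finite_PiE)
  qed
  also have "\<dots> = card V ^ (card D - 1)" using assms by (simp add: card_PiE)
  finally show ?thesis .
qed

lemma card_noninj:
  assumes "finite D" "finite V"
  shows "card {f\<in>PiE D (\<lambda>_. V). \<not> inj_on f D} \<le> card D * card D * card V ^ (card D - 1)"
proof -
  have "{f\<in>PiE D (\<lambda>_. V). \<not> inj_on f D} \<subseteq> (\<Union>p\<in>D. \<Union>q\<in>D - {p}. {f\<in>PiE D (\<lambda>_. V). f p = f q})"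
    by (auto simp: inj_on_def)
  hence "card {f\<in>PiE D (\<lambda>_. V). \<not> inj_on f D} \<le> card (\<Union>p\<in>D. \<Union>q\<in>D - {p}. {f\<in>PiE D (\<lambda>_. V). f p = f q})"
    using assms by (intro card_mono) (auto simp: finite_PiE)
  also have "\<dots> \<le> (\<Sum>p\<in>D. card (\<Union>q\<in>D - {p}. {f\<in>PiE D (\<lambda>_. V). f p = f q}))"
    using assms by (intro card_UN_le) auto
  also have "\<dots> \<le> (\<Sum>p\<in>D. \<Sum>q\<in>D - {p}. card {f\<in>PiE D (\<lambda>_. V). f p = f q})"
    using assms by (intro sum_mono card_UN_le) auto
  also have "\<dots> \<le> (\<Sum>p\<in>D. \<Sum>q\<in>D. card V ^ (card D - 1))"
  proof (intro sum_mono)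
    fix p assume "p \<in> D"
    have "(\<Sum>q\<in>D - {p}. card {f\<in>PiE D (\<lambda>_. V). f p = f q}) \<le> (\<Sum>q\<in>D - {p}. card V ^ (card D - 1))"
      using assms by (intro sum_mono card_eq_pair) auto
    also have "\<dots> \<le> (\<Sum>q\<in>D. card V ^ (card D - 1))"
      using assms by (intro sum_mono2) auto
    finally show "(\<Sum>q\<in>D - {p}. card {f\<in>PiE D (\<lambda>_. V). f p = f q}) \<le> (\<Sum>q\<in>D. card V ^ (card D - 1))" .
  qed
  also have "\<dots> = card D * card D * card V ^ (card D - 1)" by simp
  finally show ?thesis .
qed

lemma finite_inj_maps: "finite A \<Longrightarrow> finite V \<Longrightarrow> finite (inj_maps A V)"
  unfolding inj_maps_def by (rule finite_subset[of _ "PiE A (\<lambda>_. V)"]) (auto simp: finite_PiE)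

lemma card_inj_lower:
  fixes V :: "'b set"
  assumes "finite V"
  shows "(card V - j) ^ j \<le> card (inj_maps {0..<j} V)"
proof (induction j)
  case 0
  have "inj_maps {0..<0::nat} V = {\<lambda>_. undefined}" 
  proof -
    have e: "{0..<0::nat} = {}" by simp
    show ?thesis unfolding inj_maps_def e by simp
  qed
  then show ?case by simp
next
  case (Suc j)
  define A where "A = Sigma (inj_maps {0..<j} V) (\<lambda>f. V - f ` {0..<j})"
  have finI: "finite (inj_maps {0..<j} V)"
    using assms by (simp add: finite_inj_maps)
  have "(card V - Suc j) ^ Suc j \<le> (card V - j) ^ j * (card V - j)"
  proof -
    have "card V - Suc j \<le> card V - j" by simp
    hence "(card V - Suc j) ^ j * (card V - Suc j) \<le> (card V - j) ^ j * (card V - j)"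
      by (intro mult_mono power_mono) auto
    thus ?thesis by (simp add: mult.commute)
  qed
  also have "\<dots> \<le> card (inj_maps {0..<j} V) * (card V - j)"
    using Suc by simp
  also have "\<dots> = (\<Sum>f\<in>inj_maps {0..<j} V. card V - j)" by simp
  also have "\<dots> \<le> (\<Sum>f\<in>inj_maps {0..<j} V. card (V - f ` {0..<j}))"
  proof (intro sum_mono)
    fix f :: "nat \<Rightarrow> 'b"
    have "card V - j \<le> card V - card (f ` {0..<j})"
      using card_image_le[of "{0..<j}" f] by simp
    also have "\<dots> \<le> card (V - f ` {0..<j})" by (rule diff_card_le_card_Diff) simp
    finally show "card V - j \<le> card (V - f ` {0..<j})" .
  qed
  also have "\<dots> = card A" unfolding A_def using finI assms by (subst card_SigmaI) auto
  also have "\<dots> = card ((\<lambda>(f, v). f(j:=v)) ` A)"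
  proof (rule card_image[symmetric], rule inj_onI, clarify)
    fix f v g w assume "(f, v) \<in> A" "(g, w) \<in> A" and eq: "f(j := v) = g(j := w)"
    hence fe: "f \<in> extensional {0..<j}" "g \<in> extensional {0..<j}" by (auto simp: A_def inj_maps_def PiE_def)
    show "f = g \<and> v = w"
    proof
      show "v = w" using eq by (metis fun_upd_same)
      show "f = g"
      proof
        fix i show "f i = g i"
        proof (cases "i = j")
          case True thus ?thesis using fe by (simp add: extensional_def)
        next
          case False thus ?thesis using eq by (metis fun_upd_other)
        qed
      qed
    qed
  qed
  also have "\<dots> \<le> card (inj_maps {0..<Suc j} V)"
  proof (rule card_mono)
    show "finite (inj_maps {0..<Suc j} V)"
      using assms by (simp add: finite_inj_maps)
    show "(\<lambda>(f, v). f(j:=v)) ` A \<subseteq> inj_maps {0..<Suc j} V"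
    proof clarify
      fix f v assume "(f, v) \<in> A"
      hence f: "f \<in> {0..<j} \<rightarrow>\<^sub>E V" "inj_on f {0..<j}" "v \<in> V" "v \<notin> f ` {0..<j}"
        by (auto simp: A_def inj_maps_def)
      have "f(j:=v) \<in> {0..<Suc j} \<rightarrow>\<^sub>E V"
        using f(1,3) by (auto simp: PiE_def extensional_def)
      moreover have "inj_on (f(j:=v)) {0..<Suc j}"
      proof -
        have e: "{0..<Suc j} = insert j {0..<j}" by auto
        have i1: "inj_on (f(j:=v)) {0..<j}" using f(2) by (simp add: inj_on_def)
        have "(f(j:=v)) ` {0..<j} = f ` {0..<j}" by auto
        thus ?thesis unfolding e using i1 f(4) by simp
      qed
      ultimately show "f(j:=v) \<in> inj_maps {0..<Suc j} V" unfolding inj_maps_def by blast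
    qed
  qed
  finally show ?case .
qed



lemma inj_on_fun0:
  "inj_on (\<lambda>z. z (0::nat)) (PiE {..<Suc 0} (\<lambda>_. V))"
proof (rule inj_onI)
  fix z z' assume z: "z \<in> PiE {..<Suc 0} (\<lambda>_. V)" and z': "z' \<in> PiE {..<Suc 0} (\<lambda>_. V)" and e: "z 0 = z' 0"
  show "z = z'"
  proof
    fix i show "z i = z' i"
      using z z' e by (cases "i = 0") (auto simp: PiE_def extensional_def)
  qed
qed

lemma good_bound:
  fixes V :: "'b set" and E :: "'b set set" and y :: "nat \<Rightarrow> nat \<Rightarrow> 'b"
  assumes finV: "finite V" and EHsub: "EH \<subseteq> Pow {0..<m}" and spos: "\<forall>i<m. 0 < s i" and km: "k < m"
    and nosub: "\<not> sub_hg (blowup_V m s) (blowup_E EH s) V E"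
    and yin: "y \<in> PiE ({0..<m} - {k}) (\<lambda>i. PiE {..<s i} (\<lambda>_. V))"
    and yinj: "inj_on (\<lambda>p\<in>Sigma ({0..<m} - {k}) (\<lambda>i. {..<s i}). y (fst p) (snd p)) (Sigma ({0..<m} - {k}) (\<lambda>i. {..<s i}))"
  shows "card {z \<in> PiE {..<Suc 0} (\<lambda>_. V).
           \<forall>g\<in>PiE {0..<m} (\<lambda>i. {..<(s(k:=Suc 0)) i}).
             (\<forall>F\<in>EH. (\<lambda>i\<in>{0..<m}. (y(k:=z)) i (g i)) ` F \<in> E)}
         < s k + (\<Sum>i\<in>{0..<m} - {k}. s i)"
proof (rule ccontr)
  define J where "J = {0..<m} - {k}"
  define D where "D = Sigma J (\<lambda>i. {..<s i})"
  define L where "L = (\<Sum>i\<in>J. s i)"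
  define fl where "fl = (\<lambda>p\<in>D. y (fst p) (snd p))"
  define Zg where "Zg = {z \<in> PiE {..<Suc 0} (\<lambda>_. V).
           \<forall>g\<in>PiE {0..<m} (\<lambda>i. {..<(s(k:=Suc 0)) i}).
             (\<forall>F\<in>EH. (\<lambda>i\<in>{0..<m}. (y(k:=z)) i (g i)) ` F \<in> E)}"
  assume "\<not> card Zg < s k + (\<Sum>i\<in>{0..<m} - {k}. s i)"
  hence cZ: "card Zg \<ge> s k + L" by (simp add: L_def J_def Zg_def)
  have finD: "finite D" by (simp add: D_def J_def)
  have cD: "card D = L" by (simp add: D_def L_def J_def)
  define W where "W = (\<lambda>z. z 0) ` Zg"
  define Y where "Y = fl ` D"
  have cW: "card W = card Zg" unfolding W_def
    by (rule card_image, rule inj_on_subset[OF inj_on_fun0]) (auto simp: Zg_def)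
  have cY: "card Y \<le> L" unfolding Y_def using card_image_le[OF finD, of fl] cD by simp
  have WV: "W \<subseteq> V" by (auto simp: W_def Zg_def PiE_def Pi_def)
  have finW: "finite W" using WV finV finite_subset by blast
  have "s k \<le> card W - card Y" using cW cY cZ by simp
  also have "\<dots> \<le> card (W - Y)" using finD by (intro diff_card_le_card_Diff) (simp add: Y_def)
  finally have "s k \<le> card (W - Y)" .
  then obtain S where S: "S \<subseteq> W - Y" "card S = s k" by (meson obtain_subset_with_card_n)
  have finS: "finite S" using S(1) finW finite_subset by blast
  obtain wv where wv: "bij_betw wv {0..<s k} S"
    using ex_bij_betw_nat_finite[OF finS] S(2) by auto
  define f where "f = (\<lambda>(i::nat, j::nat). if i = k then wv j else y i j)"
  have "sub_hg (blowup_V m s) (blowup_E EH s) V E"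
    unfolding sub_hg_def
  proof (intro exI conjI)
    show "inj_on f (blowup_V m s)"
    proof (rule inj_onI, clarify)
      fix i j i' j' assume p: "(i, j) \<in> blowup_V m s" "(i', j') \<in> blowup_V m s" and e: "f (i, j) = f (i', j')"
      have ij: "i < m" "j < s i" "i' < m" "j' < s i'" using p by (auto simp: blowup_V_def)
      show "i = i' \<and> j = j'"
      proof (cases "i = k"; cases "i' = k")
        assume "i = k" "i' = k"
        thus ?thesis using e ij wv by (auto simp: f_def bij_betw_def inj_on_def)
      next
        assume a: "i = k" "i' \<noteq> k"
        hence "f (i', j') \<in> Y" using ij by (auto simp: f_def Y_def fl_def D_def J_def image_iff intro!: bexI[of _ "(i',j')"])
        moreover have "f (i, j) \<in> S" using a ij wv by (auto simp: f_def bij_betw_def)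
        ultimately show ?thesis using e S(1) by auto
      next
        assume a: "i \<noteq> k" "i' = k"
        hence "f (i, j) \<in> Y" using ij by (auto simp: f_def Y_def fl_def D_def J_def image_iff intro!: bexI[of _ "(i,j)"])
        moreover have "f (i', j') \<in> S" using a ij wv by (auto simp: f_def bij_betw_def)
        ultimately show ?thesis using e S(1) by auto
      next
        assume a: "i \<noteq> k" "i' \<noteq> k"
        have D1: "(i, j) \<in> D" "(i', j') \<in> D" using a ij by (auto simp: D_def J_def)
        have "fl (i, j) = fl (i', j')" using e a D1 by (simp add: f_def fl_def)
        hence "(i, j) = (i', j')" using yinj D1 unfolding fl_def D_def J_def inj_on_def by blast
        thus ?thesis by simp
      qed
    qed
    show "f ` blowup_V m s \<subseteq> V"
    proof clarify
      fix a b i j assume p: "(i, j) \<in> blowup_V m s"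
      have ij: "i < m" "j < s i" using p by (auto simp: blowup_V_def)
      show "f (i, j) \<in> V"
      proof (cases "i = k")
        case True
        hence "f (i, j) \<in> S" using ij wv by (auto simp: f_def bij_betw_def)
        thus ?thesis using S(1) WV by auto
      next
        case False
        thus ?thesis using yin ij by (auto simp: f_def PiE_def Pi_def)
      qed
    qed
    show "\<forall>F'\<in>blowup_E EH s. f ` F' \<in> E"
    proof
      fix F' assume "F' \<in> blowup_E EH s"
      then obtain F g where F: "F' = (\<lambda>i. (i, g i)) ` F" "F \<in> EH" "\<forall>i\<in>F. g i < s i"
        by (auto simp: blowup_E_def)
      have Fm: "F \<subseteq> {0..<m}" using F(2) EHsub by auto
      define j0 where "j0 = (if k \<in> F then g k else 0)"
      have j0: "j0 < s k" using F(3) spos km by (auto simp: j0_def)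
      hence "wv j0 \<in> S" using wv by (auto simp: bij_betw_def)
      hence "wv j0 \<in> W" using S(1) by auto
      then obtain z where z: "z \<in> Zg" "z 0 = wv j0" by (auto simp: W_def)
      define g2 where "g2 = (\<lambda>i\<in>{0..<m}. if i = k then 0 else if i \<in> F then g i else 0)"
      have g2: "g2 \<in> PiE {0..<m} (\<lambda>i. {..<(s(k:=Suc 0)) i})"
        using F(3) spos by (auto simp: g2_def)
      have "(\<lambda>i\<in>{0..<m}. (y(k:=z)) i (g2 i)) ` F \<in> E" using z(1) g2 F(2) by (auto simp: Zg_def)
      moreover have "(\<lambda>i\<in>{0..<m}. (y(k:=z)) i (g2 i)) ` F = f ` F'"
        unfolding F(1) image_image
      proof (rule image_cong[OF refl])
        fix i assume "i \<in> F"
        hence im: "i \<in> {0..<m}" using Fm by auto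
        show "(\<lambda>i\<in>{0..<m}. (y(k:=z)) i (g2 i)) i = f (i, g i)"
        proof (cases "i = k")
          case True
          thus ?thesis using im z(2) \<open>i \<in> F\<close> by (simp add: g2_def f_def j0_def)
        next
          case False
          thus ?thesis using im \<open>i \<in> F\<close> by (simp add: g2_def f_def)
        qed
      qed
      ultimately show "f ` F' \<in> E" by simp
    qed
  qed
  thus False using nosub by simp
qed



lemma sum_of_bool_card: "finite A \<Longrightarrow> (\<Sum>z\<in>A. of_bool (P z)) = real (card {z\<in>A. P z})"
  by (simp add: Int_def)

lemma cntB_upper:
  fixes V :: "'b set" and E :: "'b set set"
  assumes finV: "finite V" and EHsub: "EH \<subseteq> Pow {0..<m}" and spos: "\<forall>i<m. 0 < s i" and km: "k < m"
    and nosub: "\<not> sub_hg (blowup_V m s) (blowup_E EH s) V E"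
  shows "cntB V {0..<m} (s(k:=Suc 0)) (\<lambda>x. \<forall>F\<in>EH. x ` F \<in> E)
     \<le> real (s k + (\<Sum>i\<in>{0..<m} - {k}. s i) + (\<Sum>i\<in>{0..<m} - {k}. s i) * (\<Sum>i\<in>{0..<m} - {k}. s i))
       * real (card V) ^ (\<Sum>i\<in>{0..<m} - {k}. s i)"
proof -
  define J where "J = {0..<m} - {k}"
  define L where "L = (\<Sum>i\<in>J. s i)"
  define s' where "s' = s(k:=Suc 0)"
  define n where "n = card V"
  define D where "D = Sigma J (\<lambda>i. {..<s i})"
  define P where "P = PiE J (\<lambda>i. PiE {..<s i} (\<lambda>_. V))"
  define fl where "fl = (\<lambda>y::nat \<Rightarrow> nat \<Rightarrow> 'b. (\<lambda>p\<in>D. y (fst p) (snd p)))"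
  define Good where "Good = {y :: nat \<Rightarrow> nat \<Rightarrow> 'b. inj_on (fl y) D}"
  define c where "c y = card {z \<in> PiE {..<Suc 0} (\<lambda>_. V).
           \<forall>g\<in>PiE {0..<m} (\<lambda>i. {..<s' i}).
             (\<forall>F\<in>EH. (\<lambda>i\<in>{0..<m}. (y(k:=z)) i (g i)) ` F \<in> E)}" for y
  have finJ: "finite J" and kJ: "k \<notin> J" and IJ: "{0..<m} = insert k J" using km by (auto simp: J_def)
  have finD: "finite D" by (simp add: D_def finJ)
  have cD: "card D = L" using finJ by (simp add: D_def L_def)
  have finP: "finite P" using finV finJ by (simp add: P_def finite_PiE)
  have cP: "card P = n ^ L"
    using finJ finV by (simp add: P_def card_PiE L_def n_def power_sum)
  have PJ: "PiE J (\<lambda>i. PiE {..<s' i} (\<lambda>_. V)) = P"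
    unfolding P_def
  proof (rule PiE_cong)
    fix i assume "i \<in> J"
    hence "i \<noteq> k" using kJ by auto
    thus "PiE {..<s' i} (\<lambda>_. V) = PiE {..<s i} (\<lambda>_. V)" by (simp add: s'_def)
  qed
  have sk1: "s' k = Suc 0" by (simp add: s'_def)
  have step1: "cntB V {0..<m} s' (\<lambda>x. \<forall>F\<in>EH. x ` F \<in> E) = (\<Sum>y\<in>P. real (c y))"
  proof -
    have "cntB V {0..<m} s' (\<lambda>x. \<forall>F\<in>EH. x ` F \<in> E) =
      (\<Sum>z\<in>PiE {..<s' k} (\<lambda>_. V). \<Sum>y\<in>PiE J (\<lambda>i. PiE {..<s' i} (\<lambda>_. V)).
         of_bool (\<forall>g\<in>PiE {0..<m} (\<lambda>i. {..<s' i}).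
             (\<forall>F\<in>EH. (\<lambda>i\<in>{0..<m}. (y(k:=z)) i (g i)) ` F \<in> E)))"
      unfolding cntB_def IJ by (rule sum_PiE_insert[OF finJ kJ]) (simp add: finite_PiE finV)
    also have "\<dots> = (\<Sum>y\<in>P. \<Sum>z\<in>PiE {..<Suc 0} (\<lambda>_. V).
         of_bool (\<forall>g\<in>PiE {0..<m} (\<lambda>i. {..<s' i}).
             (\<forall>F\<in>EH. (\<lambda>i\<in>{0..<m}. (y(k:=z)) i (g i)) ` F \<in> E)))"
      unfolding PJ sk1 by (rule sum.swap)
    also have "\<dots> = (\<Sum>y\<in>P. real (c y))"
      unfolding c_def using finV by (intro sum.cong refl sum_of_bool_card) (simp add: finite_PiE)
    finally show ?thesis .
  qed
  have c_le_n: "c y \<le> n" for y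
  proof -
    have "c y \<le> card (PiE {..<Suc 0} (\<lambda>_::nat. V))"
      unfolding c_def using finV by (intro card_mono) (auto simp: finite_PiE)
    also have "\<dots> = n" by (simp add: card_PiE n_def)
    finally show ?thesis .
  qed
  have c_good: "c y \<le> s k + L" if "y \<in> P" "y \<in> Good" for y
  proof -
    have "c y < s k + L"
      unfolding c_def L_def J_def s'_def
      by (rule good_bound[OF finV EHsub spos km nosub])
         (use that in \<open>auto simp: P_def J_def Good_def fl_def D_def\<close>)
    thus ?thesis by simp
  qed
  have bad_card: "card (P - Good) \<le> L * L * n ^ (L - 1)"
  proof -
    have "card (P - Good) \<le> card {f\<in>PiE D (\<lambda>_. V). \<not> inj_on f D}"
    proof (rule card_inj_on_le)
      show "inj_on fl (P - Good)"
      proof (rule inj_onI)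
        fix y y' assume y: "y \<in> P - Good" and y': "y' \<in> P - Good" and e: "fl y = fl y'"
        show "y = y'"
        proof (rule ext)
          fix i show "y i = y' i"
          proof (cases "i \<in> J")
            case True
            show ?thesis
            proof (rule ext)
              fix j show "y i j = y' i j"
              proof (cases "j < s i")
                case True
                hence "(i, j) \<in> D" using \<open>i \<in> J\<close> by (simp add: D_def)
                thus ?thesis using fun_cong[OF e, of "(i,j)"] by (simp add: fl_def)
              next
                case False
                have "y i \<in> PiE {..<s i} (\<lambda>_. V)" "y' i \<in> PiE {..<s i} (\<lambda>_. V)"
                  using PiE_mem[of y J _ i] PiE_mem[of y' J _ i] y y' \<open>i \<in> J\<close> unfolding P_def by auto
                thus ?thesis using False by (metis PiE_arb lessThan_iff)
              qed
            qed
          next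
            case False
            thus ?thesis using y y' by (auto simp: P_def PiE_def extensional_def)
          qed
        qed
      qed
      show "fl ` (P - Good) \<subseteq> {f\<in>PiE D (\<lambda>_. V). \<not> inj_on f D}"
        by (auto simp: fl_def P_def D_def Good_def PiE_def Pi_def)
      show "finite {f\<in>PiE D (\<lambda>_. V). \<not> inj_on f D}" using finD finV by (simp add: finite_PiE)
    qed
    also have "\<dots> \<le> L * L * n ^ (L - 1)" using card_noninj[OF finD finV] cD by (simp add: n_def)
    finally show ?thesis .
  qed
  have bad_n: "real (card (P - Good)) * real n \<le> real (L * L) * real n ^ L"
  proof (cases "L = 0")
    case True
    thus ?thesis using bad_card by simp
  next
    case False
    have "real (card (P - Good)) * real n \<le> real (L * L * n ^ (L - 1)) * real n"
    proof (rule mult_right_mono)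
      show "real (card (P - Good)) \<le> real (L * L * n ^ (L - 1))" using bad_card by (simp only: of_nat_le_iff)
    qed simp
    also have "\<dots> = real (L * L) * real n ^ L"
    proof -
      obtain L' where "L = Suc L'" using False by (cases L) auto
      thus ?thesis by (simp add: algebra_simps)
    qed
    finally show ?thesis .
  qed
  have "(\<Sum>y\<in>P. real (c y)) = (\<Sum>y\<in>P \<inter> Good. real (c y)) + (\<Sum>y\<in>P - Good. real (c y))"
    using finP by (rule sum.Int_Diff)
  also have "\<dots> \<le> (\<Sum>y\<in>P \<inter> Good. real (s k + L)) + (\<Sum>y\<in>P - Good. real n)"
  proof (intro add_mono sum_mono)
    fix y assume "y \<in> P \<inter> Good"
    hence "c y \<le> s k + L" using c_good by auto
    thus "real (c y) \<le> real (s k + L)" by (simp only: of_nat_le_iff)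
  next
    fix y show "real (c y) \<le> real n" using c_le_n[of y] by (simp only: of_nat_le_iff)
  qed
  also have "\<dots> = real (card (P \<inter> Good)) * real (s k + L) + real (card (P - Good)) * real n"
    by simp
  also have "\<dots> \<le> real (card P) * real (s k + L) + real (L * L) * real n ^ L"
  proof (rule add_mono)
    have "card (P \<inter> Good) \<le> card P" using finP by (simp add: card_mono)
    thus "real (card (P \<inter> Good)) * real (s k + L) \<le> real (card P) * real (s k + L)"
      by (intro mult_right_mono) auto
  qed (rule bad_n)
  also have "\<dots> = real (s k + L + L * L) * real n ^ L" using cP by (simp add: algebra_simps)
  finally show ?thesis using step1 by (simp add: s'_def L_def J_def n_def)
qed



lemma root_bound:
  fixes t K n :: real and p :: nat
  assumes "t \<ge> 0" "p > 0" "t ^ p \<le> K / n" "K \<ge> 0" "n > 0"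
  shows "t \<le> K powr (1 / real p) * n powr (- (1 / real p))"
proof (cases "t = 0")
  case True thus ?thesis using assms by simp
next
  case False
  hence tp: "t > 0" using assms by simp
  have "t = (t ^ p) powr (1 / real p)"
    using tp assms(2) by (simp add: powr_realpow[symmetric] powr_powr)
  also have "\<dots> \<le> (K / n) powr (1 / real p)"
    using assms tp by (intro powr_mono2) auto
  also have "\<dots> = K powr (1 / real p) * n powr (- (1 / real p))"
    using assms by (simp add: powr_divide powr_minus_divide)
  finally show ?thesis .
qed

theorem mainTheorem16:
  fixes m :: nat and EH :: "nat set set" and s :: "nat \<Rightarrow> nat"
  assumes "0 < m"
    and "is_hypergraph {0..<m} EH"
    and "\<forall>i<m. 0 < s i"
  shows "\<exists>C n0. \<forall>n \<ge> n0. \<forall>(V :: nat set) E.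
           is_hypergraph V E \<and> card V = n \<and> edge_sizes E = edge_sizes EH \<and>
           \<not> sub_hg (blowup_V m s) (blowup_E EH s) V E
           \<longrightarrow> hg_density {0..<m} EH V E
                 \<le> C * real n powr (- (real (Max (s ` {0..<m})) / real (\<Prod>i<m. s i)))"
proof -
  have EHsub: "EH \<subseteq> Pow {0..<m}" using assms(2) by (simp add: is_hypergraph_def)
  have spos: "\<forall>i<m. 0 < s i" using assms(3) .
  obtain k where km: "k < m" and kmax: "s k = Max (s ` {0..<m})"
  proof -
    have "Max (s ` {0..<m}) \<in> s ` {0..<m}" using assms(1) by (intro Max_in) auto
    thus ?thesis using that by auto
  qed
  define s' where "s' = s(k := Suc 0)"
  define J where "J = {0..<m} - {k}"
  define P where "P = (\<Prod>i\<in>{0..<m}. s' i)"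
  define L where "L = (\<Sum>i\<in>J. s i)"
  define K where "K = real (s k + L + L * L)"
  have IJ: "{0..<m} = insert k J" and kJ: "k \<notin> J" and finJ: "finite J" using km by (auto simp: J_def)
  have pJ: "(\<Prod>i\<in>J. s' i) = (\<Prod>i\<in>J. s i)" using kJ by (intro prod.cong) (auto simp: s'_def)
  have sJ: "(\<Sum>i\<in>J. s' i) = (\<Sum>i\<in>J. s i)" using kJ by (intro sum.cong) (auto simp: s'_def)
  have P_eq: "P = (\<Prod>i\<in>J. s i)"
    unfolding P_def IJ using finJ kJ pJ by (simp add: s'_def)
  have Ppos: "P > 0" using spos by (simp add: P_eq J_def)
  have prod_eq: "(\<Prod>i<m. s i) = s k * P"
    unfolding P_eq lessThan_atLeast0 IJ using finJ kJ by simp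
  have sum_eq: "(\<Sum>i\<in>{0..<m}. s' i) = Suc L"
    unfolding L_def IJ using finJ kJ sJ by (simp add: s'_def)
  have skpos: "s k > 0" using spos km by simp
  have expo: "real (Max (s ` {0..<m})) / real (\<Prod>i<m. s i) = 1 / real P"
    using skpos by (simp add: kmax[symmetric] prod_eq)
  have Knn: "K \<ge> 0" by (simp add: K_def)
  define C where "C = 2 ^ m * K powr (1 / real P)"
  show ?thesis
  proof (intro exI allI impI)
    fix n :: nat and V :: "nat set" and E :: "nat set set"
    assume n0: "2 * m + 1 \<le> n"
    assume H: "is_hypergraph V E \<and> card V = n \<and> edge_sizes E = edge_sizes EH \<and>
           \<not> sub_hg (blowup_V m s) (blowup_E EH s) V E"
    have finV: "finite V" using H by (simp add: is_hypergraph_def)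
    have cV: "card V = n" using H by simp
    have nosub: "\<not> sub_hg (blowup_V m s) (blowup_E EH s) V E" using H by simp
    have npos: "real n > 0" using n0 by simp
    have Vne: "V \<noteq> {}" using cV n0 by auto
    define \<Phi> where "\<Phi> = (\<lambda>x::nat \<Rightarrow> nat. \<forall>F\<in>EH. x ` F \<in> E)"
    define X where "X = cnt V {0..<m} \<Phi>"
    define B where "B = cntB V {0..<m} s' \<Phi>"
    have Xnn: "X \<ge> 0" by (simp add: X_def cnt_nonneg)
    have MI: "X ^ P * real n ^ Suc L \<le> B * real n ^ (m * P)"
      using main_ineq[of "{0..<m}" V s' \<Phi>] finV Vne spos cV
      unfolding X_def B_def P_def[symmetric] sum_eq by (auto simp: s'_def)
    have UB: "B \<le> K * real n ^ L"
      using cntB_upper[OF finV EHsub spos km nosub] unfolding B_def K_def L_def J_def s'_def \<Phi>_def cV .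
    have "X ^ P * real n * real n ^ L \<le> (K * real n ^ (m * P)) * real n ^ L"
    proof -
      have "X ^ P * real n * real n ^ L = X ^ P * real n ^ Suc L" by simp
      also have "\<dots> \<le> B * real n ^ (m * P)" by (rule MI)
      also have "\<dots> \<le> K * real n ^ L * real n ^ (m * P)" using UB by (intro mult_right_mono) auto
      finally show ?thesis by (simp add: algebra_simps)
    qed
    hence XP: "X ^ P * real n \<le> K * real n ^ (m * P)" using npos by simp
    define t where "t = X / real n ^ m"
    have tnn: "t \<ge> 0" using Xnn by (simp add: t_def)
    have "t ^ P = X ^ P / real n ^ (m * P)" by (simp add: t_def power_divide power_mult)
    also have "\<dots> \<le> K / real n" using XP npos by (simp add: field_simps)
    finally have tP: "t ^ P \<le> K / real n" .
    have tb: "t \<le> K powr (1 / real P) * real n powr (- (1 / real P))"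
      by (rule root_bound[OF tnn Ppos tP Knn npos])
    define Gd where "Gd = {f \<in> inj_maps {0..<m} V. \<forall>F\<in>EH. f ` F \<in> E}"
    have Gsub: "Gd \<subseteq> {x \<in> PiE {0..<m} (\<lambda>_. V). \<Phi> x}"
      by (auto simp: Gd_def inj_maps_def \<Phi>_def)
    have cGd: "real (card Gd) \<le> X"
    proof -
      have "card Gd \<le> card {x \<in> PiE {0..<m} (\<lambda>_. V). \<Phi> x}"
        using Gsub finV by (intro card_mono) (auto simp: finite_PiE)
      moreover have "X = real (card {x \<in> PiE {0..<m} (\<lambda>_. V). \<Phi> x})"
        unfolding X_def cnt_def using finV by (intro sum_of_bool_card) (simp add: finite_PiE)
      ultimately show ?thesis by simp
    qed
    have cinj: "(real n / 2) ^ m \<le> real (card (inj_maps {0..<m} V))"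
    proof -
      have "real n / 2 \<le> real (n - m)" using n0 by simp
      hence "(real n / 2) ^ m \<le> real (n - m) ^ m" using npos by (intro power_mono) auto
      also have "\<dots> \<le> real (card (inj_maps {0..<m} V))"
        using card_inj_lower[OF finV, of m] cV by (simp only: of_nat_power[symmetric] of_nat_le_iff)
      finally show ?thesis .
    qed
    have hpos: "(real n / 2) ^ m > 0" using npos by simp
    have "hg_density {0..<m} EH V E = real (card Gd) / real (card (inj_maps {0..<m} V))"
      by (simp add: hg_density_def Gd_def)
    also have "\<dots> \<le> X / (real n / 2) ^ m"
      using cGd cinj hpos Xnn by (intro frac_le) auto
    also have "\<dots> = 2 ^ m * t" by (simp add: t_def power_divide field_simps)
    also have "\<dots> \<le> 2 ^ m * (K powr (1 / real P) * real n powr (- (1 / real P)))"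
      using tb by simp
    also have "\<dots> = C * real n powr (- (real (Max (s ` {0..<m})) / real (\<Prod>i<m. s i)))"
      unfolding expo C_def by (simp only: mult.assoc)
    finally show "hg_density {0..<m} EH V E
                 \<le> C * real n powr (- (real (Max (s ` {0..<m})) / real (\<Prod>i<m. s i)))" .
  qed
qed


end
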